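(* Let $B\ge 1$, let $\mathcal{A}=\{1,\dots,A\}$ and let $\Phi:\{1,\dots,B\}\to\mathcal{A}$ be a function. Let $\Delta(\varepsilon)$, $\varepsilon\ge 0$, be a family of $B\times B$ stochastic matrices whose entries are analytic functions of $\varepsilon$ at $\varepsilon=0$, and such that for every $\varepsilon>0$, $\Delta(\varepsilon)$ is non-negative and irreducible. For $\varepsilon>0$ let $Y$ be the stationary Markov chain with transition matrix $\Delta(\varepsilon)$ and let $Z=\Phi(Y)$. Then for any fixed $n$ and any fixed sequence $z_{-n}^{0}\in\mathcal{A}^{n+1}$: (1) $p(z_{-n}^{-1})=P(Z_{-n}^{-1}=z_{-n}^{-1})$ is analytic around $\varepsilon=0$; (2) for each $i$ with $-n\le i\le -1$, the vector $p(y_i=\cdot\,|z_{-n}^i):=(P(Y_i=b\mid Z_{-n}^i=z_{-n}^i))_{b=1,\dots,B}$ is analytic around $\varepsilon=0$; (3) $p(z_0|z_{-n}^{-1})=P(Z_0=z_0\mid Z_{-n}^{-1}=z_{-n}^{-1})$ is analytic around $\varepsilon=0$.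
   Context: "Analytic around $\varepsilon=0$" means that the function, defined for small $\varepsilon>0$, coincides there with a function given by a convergent power series in $\varepsilon$ in a neighborhood of $0$ (i.e. it extends analytically to $\varepsilon=0$). For $a\in\mathcal{A}$, $\Delta_a$ denotes the $B\times B$ matrix with $\Delta_a(i,j)=\Delta(i,j)$ if $\Phi(j)=a$ and $\Delta_a(i,j)=0$ otherwise; so $p(z_{-n}^{-1})=\pi\Delta_{z_{-n}}\cdots\Delta_{z_{-1}}\mathbf{1}$ with $\pi=\pi(\varepsilon)$ the stationary vector of $\Delta(\varepsilon)$. Conditional probabilities are considered for sequences whose conditioning event has positive probability for small $\varepsilon>0$. *)

theory Defs
  imports Complex_Main
begin

text \<open>States are 0..B-1; a B x B matrix is a function nat => nat => real (only indices < B matter).\<close>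

fun mpow :: "nat \<Rightarrow> (nat \<Rightarrow> nat \<Rightarrow> real) \<Rightarrow> nat \<Rightarrow> nat \<Rightarrow> nat \<Rightarrow> real" where
  "mpow B M 0 i j = (if i = j then 1 else 0)"
| "mpow B M (Suc k) i j = (\<Sum>l<B. mpow B M k i l * M l j)"

definition stochastic :: "nat \<Rightarrow> (nat \<Rightarrow> nat \<Rightarrow> real) \<Rightarrow> bool" where
  "stochastic B M \<longleftrightarrow> (\<forall>i<B. \<forall>j<B. M i j \<ge> 0) \<and> (\<forall>i<B. (\<Sum>j<B. M i j) = 1)"

definition irreducible_mat :: "nat \<Rightarrow> (nat \<Rightarrow> nat \<Rightarrow> real) \<Rightarrow> bool" where
  "irreducible_mat B M \<longleftrightarrow> (\<forall>i<B. \<forall>j<B. \<exists>k. mpow B M k i j > 0)"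

definition stationary_vec :: "nat \<Rightarrow> (nat \<Rightarrow> nat \<Rightarrow> real) \<Rightarrow> (nat \<Rightarrow> real) \<Rightarrow> bool" where
  "stationary_vec B M p \<longleftrightarrow> (\<forall>j<B. p j \<ge> 0) \<and> (\<Sum>j<B. p j) = 1 \<and>
     (\<forall>j<B. (\<Sum>i<B. p i * M i j) = p j)"

text \<open>Row vector v times Delta_a, where Delta_a keeps the columns j with Phi j = a.\<close>
definition step_vec :: "nat \<Rightarrow> (nat \<Rightarrow> nat) \<Rightarrow> (nat \<Rightarrow> nat \<Rightarrow> real) \<Rightarrow> (nat \<Rightarrow> real) \<Rightarrow> nat \<Rightarrow> nat \<Rightarrow> real" where
  "step_vec B Phi M v a j = (if Phi j = a then (\<Sum>i<B. v i * M i j) else 0)"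

fun fwd_vec :: "nat \<Rightarrow> (nat \<Rightarrow> nat) \<Rightarrow> (nat \<Rightarrow> nat \<Rightarrow> real) \<Rightarrow> (nat \<Rightarrow> real) \<Rightarrow> nat list \<Rightarrow> nat \<Rightarrow> real" where
  "fwd_vec B Phi M v [] = v"
| "fwd_vec B Phi M v (a # ws) = fwd_vec B Phi M (step_vec B Phi M v a) ws"

text \<open>p(w) = pi Delta_{w_1} ... Delta_{w_m} 1\<close>
definition word_prob :: "nat \<Rightarrow> (nat \<Rightarrow> nat) \<Rightarrow> (nat \<Rightarrow> nat \<Rightarrow> real) \<Rightarrow> (nat \<Rightarrow> real) \<Rightarrow> nat list \<Rightarrow> real" where
  "word_prob B Phi M p ws = (\<Sum>j<B. fwd_vec B Phi M p ws j)"

text \<open>P(Y_last = b, Z = w) = (pi Delta_{w_1} ... Delta_{w_m})_b ; conditional = ratio\<close>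
definition cond_state_prob :: "nat \<Rightarrow> (nat \<Rightarrow> nat) \<Rightarrow> (nat \<Rightarrow> nat \<Rightarrow> real) \<Rightarrow> (nat \<Rightarrow> real) \<Rightarrow> nat list \<Rightarrow> nat \<Rightarrow> real" where
  "cond_state_prob B Phi M p ws b = fwd_vec B Phi M p ws b / word_prob B Phi M p ws"

definition cond_next_prob :: "nat \<Rightarrow> (nat \<Rightarrow> nat) \<Rightarrow> (nat \<Rightarrow> nat \<Rightarrow> real) \<Rightarrow> (nat \<Rightarrow> real) \<Rightarrow> nat list \<Rightarrow> nat \<Rightarrow> real" where
  "cond_next_prob B Phi M p ws a = word_prob B Phi M p (ws @ [a]) / word_prob B Phi M p ws"

definition analytic_at_0 :: "(real \<Rightarrow> real) \<Rightarrow> bool" where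
  "analytic_at_0 f \<longleftrightarrow> (\<exists>r>0. \<exists>c::nat \<Rightarrow> real.
      (\<forall>x. \<bar>x\<bar> < r \<longrightarrow> summable (\<lambda>k. c k * x ^ k)) \<and>
      (\<forall>e. 0 < e \<and> e < r \<longrightarrow> (\<lambda>k. c k * e ^ k) sums f e))"

definition analytic_at_0_closed :: "(real \<Rightarrow> real) \<Rightarrow> bool" where
  "analytic_at_0_closed f \<longleftrightarrow> (\<exists>r>0. \<exists>c::nat \<Rightarrow> real.
      (\<forall>x. \<bar>x\<bar> < r \<longrightarrow> summable (\<lambda>k. c k * x ^ k)) \<and>
      (\<forall>e. 0 \<le> e \<and> e < r \<longrightarrow> (\<lambda>k. c k * e ^ k) sums f e))"

end

theory Submission
  imports Defs "HOL-Complex_Analysis.Complex_Analysis" "Jordan_Normal_Form.Determinant"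
begin


definition hol0 :: "(real \<Rightarrow> real) \<Rightarrow> bool" where
  "hol0 f \<longleftrightarrow> (\<exists>r>0. \<exists>F. F holomorphic_on ball 0 r \<and>
      (\<forall>e. 0 < e \<and> e < r \<longrightarrow> F (complex_of_real e) = complex_of_real (f e)))"

lemma hol0_imp_analytic:
  assumes "hol0 f" shows "analytic_at_0 f"
proof -
  obtain r F where r: "r > 0" and hol: "F holomorphic_on ball 0 r"
    and eq: "\<And>e. 0 < e \<Longrightarrow> e < r \<Longrightarrow> F (complex_of_real e) = complex_of_real (f e)"
    using assms unfolding hol0_def by blast
  define a where "a n = (deriv ^^ n) F 0 / fact n" for n
  define c where "c n = Re (a n)" for n
  have S: "(\<lambda>n. a n * (complex_of_real x)^n) sums F (complex_of_real x)" if "\<bar>x\<bar> < r" for x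
    using holomorphic_power_series[OF hol, of "complex_of_real x"] that unfolding a_def by simp
  have R: "(\<lambda>n. c n * x^n) sums Re (F (complex_of_real x))" if "\<bar>x\<bar> < r" for x
  proof -
    have "(\<lambda>n. Re (a n * (complex_of_real x)^n)) sums Re (F (complex_of_real x))"
      using sums_Re[OF S[OF that]] .
    moreover have "Re (a n * (complex_of_real x)^n) = c n * x^n" for n
      by (simp add: c_def flip: of_real_power)
    ultimately show ?thesis by (simp only:)
  qed
  show ?thesis unfolding analytic_at_0_def
  proof (intro exI[of _ r] conjI exI[of _ c] allI impI)
    show "r > 0" by fact
    fix x :: real assume "\<bar>x\<bar> < r" thus "summable (\<lambda>k. c k * x ^ k)" using R sums_summable by blast
  next
    fix e :: real assume "0 < e \<and> e < r"
    then show "(\<lambda>k. c k * e ^ k) sums f e" using R[of e] eq[of e] by simp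
  qed
qed

lemma analytic_imp_hol0:
  assumes "analytic_at_0 f" shows "hol0 f"
proof -
  obtain r c where r: "r > 0" and sm: "\<And>x. \<bar>x\<bar> < r \<Longrightarrow> summable (\<lambda>k. c k * x ^ k)"
    and su: "\<And>e. 0 < e \<Longrightarrow> e < r \<Longrightarrow> (\<lambda>k. c k * e ^ k) sums f e"
    using assms unfolding analytic_at_0_def by blast
  define P where "P = Abs_fps (\<lambda>n. complex_of_real (c n))"
  have h2: "\<bar>r/2\<bar> < r" using r by simp
  have "summable (\<lambda>n. complex_of_real (c n * (r/2)^n))"
    by (rule summable_of_real[OF sm[OF h2]])
  moreover have "complex_of_real (c n * (r/2)^n) = fps_nth P n * (complex_of_real (r/2))^n" for n
    by (simp add: P_def)
  ultimately have "summable (\<lambda>n. fps_nth P n * (complex_of_real (r/2))^n)"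
    by (simp only:)
  hence "conv_radius (fps_nth P) \<ge> norm (complex_of_real (r/2))" by (rule conv_radius_geI)
  hence rad: "fps_conv_radius P \<ge> ereal (r/2)" using r by (simp add: fps_conv_radius_def)
  have "ball 0 (r/2) \<subseteq> eball 0 (fps_conv_radius P)"
  proof (rule subsetI)
    fix z assume "z \<in> ball 0 (r/2)"
    hence "ereal (dist 0 z) < ereal (r/2)" by simp
    hence "ereal (dist 0 z) < fps_conv_radius P" using rad by (rule less_le_trans)
    thus "z \<in> eball 0 (fps_conv_radius P)" by (simp add: eball_def)
  qed
  hence hol: "eval_fps P holomorphic_on ball 0 (r/2)" by (rule holomorphic_on_eval_fps)
  show ?thesis unfolding hol0_def
  proof (intro exI[of _ "r/2"] conjI exI[of _ "eval_fps P"] allI impI)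
    show "r/2 > 0" using r by simp
    show "eval_fps P holomorphic_on ball 0 (r/2)" by fact
    fix e :: real assume e: "0 < e \<and> e < r/2"
    have "(\<lambda>k. complex_of_real (c k * e ^ k)) sums complex_of_real (f e)"
      using sums_of_real[OF su[of e]] e by auto
    hence "(\<lambda>k. fps_nth P k * (complex_of_real e)^k) sums complex_of_real (f e)"
      by (simp add: P_def)
    thus "eval_fps P (complex_of_real e) = complex_of_real (f e)"
      unfolding eval_fps_def by (simp add: sums_iff)
  qed
qed

lemma closed_imp_analytic: "analytic_at_0_closed f \<Longrightarrow> analytic_at_0 f"
  unfolding analytic_at_0_closed_def analytic_at_0_def by force



lemma hol0I: "r > 0 \<Longrightarrow> F holomorphic_on ball 0 r \<Longrightarrow>
   (\<And>e. 0 < e \<Longrightarrow> e < r \<Longrightarrow> F (complex_of_real e) = complex_of_real (f e)) \<Longrightarrow> hol0 f"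
  unfolding hol0_def by blast

lemma hol0E: assumes "hol0 f"
  obtains r F where "r > 0" "F holomorphic_on ball 0 r"
   "\<And>e. 0 < e \<Longrightarrow> e < r \<Longrightarrow> F (complex_of_real e) = complex_of_real (f e)"
proof -
  from assms obtain r F where "r > 0" "F holomorphic_on ball 0 r"
   "\<forall>e. 0 < e \<and> e < r \<longrightarrow> F (complex_of_real e) = complex_of_real (f e)"
    unfolding hol0_def by blast
  then show ?thesis using that by blast
qed

lemma hol0_const: "hol0 (\<lambda>e. c)"
  by (rule hol0I[of 1 "\<lambda>_. complex_of_real c"]) auto

lemma hol0_cong: assumes "hol0 f" "d > 0" "\<And>e. 0 < e \<Longrightarrow> e < d \<Longrightarrow> f e = g e"
  shows "hol0 g"
proof -
  obtain r F where r: "r > 0" "F holomorphic_on ball 0 r"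
   "\<And>e. 0 < e \<Longrightarrow> e < r \<Longrightarrow> F (complex_of_real e) = complex_of_real (f e)"
    using hol0E[OF assms(1)] by blast
  show ?thesis
    by (rule hol0I[of "min r d" F]) (use r assms(2,3) in \<open>auto intro: holomorphic_on_subset\<close>)
qed

lemma hol0_binop:
  assumes "hol0 f" "hol0 g"
    and op: "\<And>S F G. F holomorphic_on S \<Longrightarrow> G holomorphic_on S \<Longrightarrow> (\<lambda>w. opc (F w) (G w)) holomorphic_on S"
    and hom: "\<And>x y. opc (complex_of_real x) (complex_of_real y) = complex_of_real (opr x y)"
  shows "hol0 (\<lambda>e. opr (f e) (g e))"
proof -
  obtain r F where r: "r > 0" "F holomorphic_on ball 0 r"
   "\<And>e. 0 < e \<Longrightarrow> e < r \<Longrightarrow> F (complex_of_real e) = complex_of_real (f e)"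
    using hol0E[OF assms(1)] by blast
  obtain s G where s: "s > 0" "G holomorphic_on ball 0 s"
   "\<And>e. 0 < e \<Longrightarrow> e < s \<Longrightarrow> G (complex_of_real e) = complex_of_real (g e)"
    using hol0E[OF assms(2)] by blast
  have "F holomorphic_on ball 0 (min r s)" "G holomorphic_on ball 0 (min r s)"
    using r(2) s(2) by (auto intro: holomorphic_on_subset)
  from op[OF this] show ?thesis
    by (rule hol0I[of "min r s", rotated]) (use r s hom in auto)
qed

lemma hol0_add: "hol0 f \<Longrightarrow> hol0 g \<Longrightarrow> hol0 (\<lambda>e. f e + g e)"
  by (rule hol0_binop[where opc="(+)"]) (auto intro: holomorphic_intros)
lemma hol0_diff: "hol0 f \<Longrightarrow> hol0 g \<Longrightarrow> hol0 (\<lambda>e. f e - g e)"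
  by (rule hol0_binop[where opc="(-)"]) (auto intro: holomorphic_intros)
lemma hol0_mult: "hol0 f \<Longrightarrow> hol0 g \<Longrightarrow> hol0 (\<lambda>e. f e * g e)"
  by (rule hol0_binop[where opc="(*)"]) (auto intro: holomorphic_intros)

lemma hol0_sum: "finite S \<Longrightarrow> (\<And>i. i \<in> S \<Longrightarrow> hol0 (f i)) \<Longrightarrow> hol0 (\<lambda>e. \<Sum>i\<in>S. f i e)"
proof (induction S rule: finite_induct)
  case empty then show ?case by (simp add: hol0_const)
next
  case (insert x F) then show ?case by (simp add: hol0_add)
qed

lemma hol0_prod: "finite S \<Longrightarrow> (\<And>i. i \<in> S \<Longrightarrow> hol0 (f i)) \<Longrightarrow> hol0 (\<lambda>e. \<Prod>i\<in>S. f i e)"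
proof (induction S rule: finite_induct)
  case empty then show ?case by (simp add: hol0_const)
next
  case (insert x F) then show ?case by (simp add: hol0_mult)
qed

lemma hol_factor:
  assumes hol: "F holomorphic_on ball 0 r" and r: "r > 0" and nz: "w0 \<in> ball 0 r" "F w0 \<noteq> 0"
  obtains n s H where "0 < s" "s \<le> r" "H holomorphic_on ball 0 s"
    "\<And>w. w \<in> ball 0 s \<Longrightarrow> F w = w ^ n * H w" "\<And>w. w \<in> ball 0 s \<Longrightarrow> H w \<noteq> 0"
proof (cases "F 0 = 0")
  case False
  have "isCont F 0"
    using holomorphic_on_imp_continuous_on[OF hol] r
    by (simp add: continuous_on_interior)
  then obtain e where e: "e > 0" "\<And>y. dist 0 y < e \<Longrightarrow> F y \<noteq> 0"
    using continuous_at_avoid[of 0 F 0] False by auto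
  show ?thesis
  proof (rule that[of "min e r" F 0])
    show "F holomorphic_on ball 0 (min e r)" using hol by (rule holomorphic_on_subset) auto
  qed (use e r in auto)
next
  case True
  have nc: "\<not> F constant_on ball 0 r"
  proof
    assume "F constant_on ball 0 r"
    then obtain c where "\<And>w. w \<in> ball 0 r \<Longrightarrow> F w = c" unfolding constant_on_def by blast
    with True nz r show False by (metis centre_in_ball)
  qed
  show ?thesis
  proof (rule holomorphic_factor_zero_nonconstant[OF hol open_ball convex_connected[OF convex_ball] centre_in_ball[THEN iffD2, OF r] True nc])
    fix g s n assume a: "0 < n" "0 < s" "ball 0 s \<subseteq> ball 0 r" "g holomorphic_on ball 0 s"
      "\<And>w. w \<in> ball 0 s \<Longrightarrow> F w = (w - 0)^n * g w" "\<And>w. w \<in> ball 0 s \<Longrightarrow> g w \<noteq> 0"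
    show ?thesis
    proof (rule that[of "min s r" g n])
      show "g holomorphic_on ball 0 (min s r)" using a(4) by (rule holomorphic_on_subset) auto
    qed (use a r in auto)
  qed
qed



lemma hol0_div:
  assumes hf: "hol0 f" and hg: "hol0 g" and d: "d > 0"
    and gnz: "\<And>e. 0 < e \<Longrightarrow> e < d \<Longrightarrow> g e \<noteq> 0"
    and bnd: "\<And>e. 0 < e \<Longrightarrow> e < d \<Longrightarrow> \<bar>f e\<bar> \<le> \<bar>g e\<bar>"
  shows "hol0 (\<lambda>e. f e / g e)"
proof -
  obtain r1 F where r1: "r1 > 0" "F holomorphic_on ball 0 r1"
   "\<And>e. 0 < e \<Longrightarrow> e < r1 \<Longrightarrow> F (complex_of_real e) = complex_of_real (f e)"
    using hol0E[OF hf] by metis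
  obtain r2 G where r2: "r2 > 0" "G holomorphic_on ball 0 r2"
   "\<And>e. 0 < e \<Longrightarrow> e < r2 \<Longrightarrow> G (complex_of_real e) = complex_of_real (g e)"
    using hol0E[OF hg] by metis
  define r where "r = min (min r1 r2) d"
  have r: "r > 0" using r1 r2 d by (simp add: r_def)
  have Fh: "F holomorphic_on ball 0 r" using r1(2) by (rule holomorphic_on_subset) (auto simp: r_def)
  have Gh: "G holomorphic_on ball 0 r" using r2(2) by (rule holomorphic_on_subset) (auto simp: r_def)
  have Fe: "F (complex_of_real e) = complex_of_real (f e)" and Ge: "G (complex_of_real e) = complex_of_real (g e)"
    and gne: "g e \<noteq> 0" and be: "\<bar>f e\<bar> \<le> \<bar>g e\<bar>" if "0 < e" "e < r" for e
    using that r1(3) r2(3) gnz bnd by (auto simp: r_def)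
  show ?thesis
  proof (cases "\<forall>w\<in>ball 0 r. F w = 0")
    case True
    have z: "f e / g e = 0" if "0 < e" "e < r" for e
    proof -
      have "complex_of_real (f e) = 0" using True Fe[OF that] that by auto
      thus ?thesis by simp
    qed
    show ?thesis by (rule hol0_cong[OF hol0_const[of 0] r]) (simp add: z)
  next
    case False
    then obtain w0 where w0: "w0 \<in> ball 0 r" "F w0 \<noteq> 0" by blast
    obtain l s1 H1 where s1: "0 < s1" "s1 \<le> r" "H1 holomorphic_on ball 0 s1"
      "\<And>w. w \<in> ball 0 s1 \<Longrightarrow> F w = w ^ l * H1 w" "\<And>w. w \<in> ball 0 s1 \<Longrightarrow> H1 w \<noteq> 0"
      using hol_factor[OF Fh r w0] by metis
    have gw: "complex_of_real (r/2) \<in> ball 0 r" "G (complex_of_real (r/2)) \<noteq> 0"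
      using r Ge[of "r/2"] gne[of "r/2"] by auto
    obtain m s2 H2 where s2: "0 < s2" "s2 \<le> r" "H2 holomorphic_on ball 0 s2"
      "\<And>w. w \<in> ball 0 s2 \<Longrightarrow> G w = w ^ m * H2 w" "\<And>w. w \<in> ball 0 s2 \<Longrightarrow> H2 w \<noteq> 0"
      using hol_factor[OF Gh r gw] by metis
    define s where "s = min s1 s2"
    have s: "s > 0" "s \<le> r" using s1 s2 by (auto simp: s_def)
    have H1h: "H1 holomorphic_on ball 0 s" using s1(3) by (rule holomorphic_on_subset) (auto simp: s_def)
    have H2h: "H2 holomorphic_on ball 0 s" using s2(3) by (rule holomorphic_on_subset) (auto simp: s_def)
    have inb: "complex_of_real e \<in> ball 0 s1" "complex_of_real e \<in> ball 0 s2" if "0 < e" "e < s" for e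
      using that by (auto simp: s_def)
    have lm: "m \<le> l"
    proof (rule ccontr)
      assume "\<not> m \<le> l"
      hence ml: "l < m" by simp
      have ineq: "cmod (H1 (complex_of_real e)) \<le> e * cmod (H2 (complex_of_real e))"
        if e: "0 < e" "e < min s 1" for e
      proof -
        have e': "0 < e" "e < s" "e < r" using e s by auto
        have "cmod (F (complex_of_real e)) \<le> cmod (G (complex_of_real e))"
          using be[OF e'(1,3)] Fe[OF e'(1,3)] Ge[OF e'(1,3)] by simp
        hence "e ^ l * cmod (H1 (complex_of_real e)) \<le> e ^ m * cmod (H2 (complex_of_real e))"
          using s1(4)[OF inb(1)[OF e'(1,2)]] s2(4)[OF inb(2)[OF e'(1,2)]] e
          by (simp add: norm_mult norm_power)
        also have "e ^ m = e ^ l * e ^ (m - l)" using ml by (simp flip: power_add)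
        finally have "cmod (H1 (complex_of_real e)) \<le> e ^ (m - l) * cmod (H2 (complex_of_real e))"
          using e by (simp add: mult.assoc)
        also have "e ^ (m - l) \<le> e ^ 1"
          by (rule power_decreasing) (use ml e in auto)
        finally show ?thesis by (simp add: mult_right_mono)
      qed
      have c1: "isCont H1 0" using holomorphic_on_imp_continuous_on[OF H1h] s
        by (simp add: continuous_on_interior)
      have c2: "isCont H2 0" using holomorphic_on_imp_continuous_on[OF H2h] s
        by (simp add: continuous_on_interior)
      have t0: "((\<lambda>e::real. complex_of_real e) \<longlongrightarrow> 0) (at_right 0)"
        by (intro tendsto_eq_intros) (auto intro: tendsto_ident_at)
      have T1: "((\<lambda>e. cmod (H1 (complex_of_real e))) \<longlongrightarrow> cmod (H1 0)) (at_right 0)"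
        by (intro tendsto_norm isCont_tendsto_compose[OF c1 t0])
      have T2: "((\<lambda>e. e * cmod (H2 (complex_of_real e))) \<longlongrightarrow> 0 * cmod (H2 0)) (at_right (0::real))"
        by (intro tendsto_mult tendsto_norm isCont_tendsto_compose[OF c2 t0]) (auto intro: tendsto_ident_at)
      have ev: "eventually (\<lambda>e. cmod (H1 (complex_of_real e)) \<le> e * cmod (H2 (complex_of_real e))) (at_right 0)"
        unfolding eventually_at_right_field using s
        by (intro exI[of _ "min s 1"]) (auto intro: ineq)
      have "cmod (H1 0) \<le> 0 * cmod (H2 0)"
        by (rule tendsto_le[OF _ T2 T1 ev]) simp
      moreover have "H1 0 \<noteq> 0" using s1(5)[of 0] s1(1) by simp
      ultimately show False by simp
    qed
    define Q where "Q w = w ^ (l - m) * H1 w / H2 w" for w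
    have Qh: "Q holomorphic_on ball 0 s" unfolding Q_def
      using H1h H2h s2(5) by (auto intro!: holomorphic_intros simp: s_def)
    show ?thesis
    proof (rule hol0I[OF s(1) Qh])
      fix e :: real assume e: "0 < e" "e < s"
      have e': "e < r" using e s by simp
      have "Q (complex_of_real e) * G (complex_of_real e) = F (complex_of_real e)"
        using s1(4)[OF inb(1)[OF e]] s2(4)[OF inb(2)[OF e]] s2(5)[OF inb(2)[OF e]] lm
        by (simp add: Q_def field_simps flip: power_add)
      hence "Q (complex_of_real e) = F (complex_of_real e) / G (complex_of_real e)"
        using Ge[OF e(1) e'] gne[OF e(1) e'] by (simp add: field_simps)
      thus "Q (complex_of_real e) = complex_of_real (f e / g e)"
        using Fe[OF e(1) e'] Ge[OF e(1) e'] by simp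
    qed
  qed
qed



lemma hol0_det:
  assumes car: "\<And>e. A e \<in> carrier_mat n n"
    and ent: "\<And>i j. i < n \<Longrightarrow> j < n \<Longrightarrow> hol0 (\<lambda>e. A e $$ (i,j))"
  shows "hol0 (\<lambda>e. Determinant.det (A e))"
proof -
  have "hol0 (\<lambda>e. \<Sum>p\<in>{p. p permutes {0..<n}}. signof p * (\<Prod>i = 0..<n. A e $$ (i, p i)))"
  proof (rule hol0_sum)
    show "finite {p. p permutes {0..<n}}" by (rule finite_permutations) simp
    fix p assume p: "p \<in> {p. p permutes {0..<n}}"
    have pr: "hol0 (\<lambda>e. \<Prod>i = 0..<n. A e $$ (i, p i))"
    proof (rule hol0_prod)
      show "finite {0..<n}" by simp
      fix i assume i: "i \<in> {0..<n}"
      have pp: "p permutes {0..<n}" using p by simp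
      have "p i \<in> {0..<n}" using permutes_in_image[OF pp] i by simp
      then have "p i < n" "i < n" using i by auto
      then show "hol0 (\<lambda>e. A e $$ (i, p i))" by (rule ent[rotated])
    qed
    show "hol0 (\<lambda>e. signof p * (\<Prod>i = 0..<n. A e $$ (i, p i)))"
      by (rule hol0_mult[OF hol0_const pr])
  qed
  moreover have "(\<lambda>e. Determinant.det (A e)) = (\<lambda>e. \<Sum>p\<in>{p. p permutes {0..<n}}. signof p * (\<Prod>i = 0..<n. A e $$ (i, p i)))"
    by (rule ext, rule det_def'[OF car])
  ultimately show ?thesis by (simp only:)
qed

lemma hol0_adj:
  assumes car: "\<And>e. A e \<in> carrier_mat n n"
    and ent: "\<And>i j. i < n \<Longrightarrow> j < n \<Longrightarrow> hol0 (\<lambda>e. A e $$ (i,j))"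
    and ij: "i < n" "j < n"
  shows "hol0 (\<lambda>e. adj_mat (A e) $$ (i,j))"
proof -
  have dims: "dim_row (A e) = n" "dim_col (A e) = n" for e using car[of e] by auto
  have "hol0 (\<lambda>e. (-1)^(j+i) * Determinant.det (mat_delete (A e) j i))"
  proof (rule hol0_mult[OF hol0_const], rule hol0_det)
    show "mat_delete (A e) j i \<in> carrier_mat (n-1) (n-1)" for e
      using mat_delete_carrier[OF car[of e]] .
    fix a b assume ab: "a < n - 1" "b < n - 1"
    have eq: "mat_delete (A e) j i $$ (a,b) = A e $$ (if a < j then a else Suc a, if b < i then b else Suc b)" for e
      unfolding mat_delete_def using ab dims by simp
    show "hol0 (\<lambda>e. mat_delete (A e) j i $$ (a, b))"
      unfolding eq by (rule ent) (use ab in auto)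
  qed
  moreover have "(\<lambda>e. adj_mat (A e) $$ (i,j)) = (\<lambda>e. (-1)^(j+i) * Determinant.det (mat_delete (A e) j i))"
    by (rule ext) (simp add: adj_mat_def cofactor_def ij dims)
  ultimately show ?thesis by (simp only:)
qed



lemma mpow_nonneg:
  assumes "stochastic B M" "j < B" shows "mpow B M k i j \<ge> 0"
  using assms(2)
proof (induction k arbitrary: j)
  case 0 then show ?case by simp
next
  case (Suc k)
  have "0 \<le> mpow B M k i l * M l j" if "l < B" for l
    using Suc that assms(1) unfolding stochastic_def by auto
  then show ?case by (auto intro: sum_nonneg)
qed

lemma harmonic_const:
  assumes st: "stochastic B M" and irr: "irreducible_mat B M"
    and harm: "\<And>i. i < B \<Longrightarrow> x i = (\<Sum>j<B. M i j * x j)"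
    and i: "i < B" and j: "j < B"
  shows "x i = x j"
proof -
  define m where "m = Max (x ` {..<B})"
  have fin: "finite (x ` {..<B})" and ne: "x ` {..<B} \<noteq> {}" using i by auto
  have le: "x l \<le> m" if "l < B" for l unfolding m_def using fin that by auto
  obtain i0 where i0: "i0 < B" "x i0 = m" unfolding m_def using Max_in[OF fin ne] by auto
  have key: "mpow B M k i0 l > 0 \<Longrightarrow> l < B \<Longrightarrow> x l = m" for k l
  proof (induction k arbitrary: l)
    case 0 then show ?case using i0 by (cases "i0 = l") auto
  next
    case (Suc k)
    have "0 < (\<Sum>l'<B. mpow B M k i0 l' * M l' l)" using Suc.prems by simp
    have "\<exists>l'\<in>{..<B}. mpow B M k i0 l' * M l' l > 0"
    proof (rule ccontr)
      assume "\<not> ?thesis"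
      hence "\<forall>l'\<in>{..<B}. mpow B M k i0 l' * M l' l \<le> 0" by (auto simp: not_less)
      hence "(\<Sum>l'<B. mpow B M k i0 l' * M l' l) \<le> 0" by (intro sum_nonpos) blast
      with \<open>0 < (\<Sum>l'<B. mpow B M k i0 l' * M l' l)\<close> show False by simp
    qed
    then obtain l' where l': "l' < B" "mpow B M k i0 l' * M l' l > 0" by blast
    have nn: "mpow B M k i0 l' \<ge> 0" "M l' l \<ge> 0"
      using mpow_nonneg[OF st l'(1)] st l' Suc.prems unfolding stochastic_def by auto
    have pos: "mpow B M k i0 l' > 0" "M l' l > 0"
      using l'(2) nn by (auto simp: zero_less_mult_iff)
    have xl': "x l' = m" using Suc.IH[OF pos(1) l'(1)] .
    have rs: "(\<Sum>j<B. M l' j) = 1" using st l'(1) unfolding stochastic_def by auto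
    have "(\<Sum>j<B. M l' j * (m - x j)) = m * (\<Sum>j<B. M l' j) - (\<Sum>j<B. M l' j * x j)"
      by (simp add: algebra_simps sum_subtractf sum_distrib_left)
    also have "\<dots> = 0" using rs harm[OF l'(1)] xl' by simp
    finally have s0: "(\<Sum>j<B. M l' j * (m - x j)) = 0" .
    have nn2: "\<forall>j\<in>{..<B}. 0 \<le> M l' j * (m - x j)"
      using st l'(1) le unfolding stochastic_def by auto
    have "\<forall>j\<in>{..<B}. M l' j * (m - x j) = 0"
      using iffD1[OF sum_nonneg_eq_0_iff[OF finite_lessThan, where f="\<lambda>j. M l' j * (m - x j)"] s0] nn2 by blast
    hence "M l' l * (m - x l) = 0" using Suc.prems(2) by blast
    then show ?case using pos(2) by simp
  qed
  have "x l = m" if lB: "l < B" for l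
  proof -
    obtain k where "mpow B M k i0 l > 0" using irr i0(1) lB unfolding irreducible_mat_def by blast
    then show ?thesis using key lB by blast
  qed
  then show ?thesis using i j by simp
qed



definition Nmat :: "nat \<Rightarrow> (nat \<Rightarrow> nat \<Rightarrow> real) \<Rightarrow> real mat" where
  "Nmat B M = mat B B (\<lambda>(i,j). (if i = j then 1 else 0) - M i j + 1)"

lemma Nmat_carrier: "Nmat B M \<in> carrier_mat B B" unfolding Nmat_def by simp

lemma Nmat_index: "i < B \<Longrightarrow> j < B \<Longrightarrow> Nmat B M $$ (i,j) = (if i = j then 1 else 0) - M i j + 1"
  unfolding Nmat_def by simp

lemma mult_mat_vec_sum: "A \<in> carrier_mat n n \<Longrightarrow> v \<in> carrier_vec n \<Longrightarrow> i < n \<Longrightarrow>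
   (A *\<^sub>v v) $ i = (\<Sum>j<n. A $$ (i,j) * v $ j)"
  by (simp add: scalar_prod_def atLeast0LessThan)

lemma mult_mat_sum: "A \<in> carrier_mat n n \<Longrightarrow> C \<in> carrier_mat n n \<Longrightarrow> i < n \<Longrightarrow> j < n \<Longrightarrow>
   (A * C) $$ (i,j) = (\<Sum>k<n. A $$ (i,k) * C $$ (k,j))"
  by (simp add: scalar_prod_def atLeast0LessThan)

lemma Nmat_det_nz:
  assumes st: "stochastic B M" and irr: "irreducible_mat B M" and sv: "stationary_vec B M p"
  shows "Determinant.det (Nmat B M) \<noteq> 0"
proof
  assume "Determinant.det (Nmat B M) = 0"
  then obtain v where v: "v \<in> carrier_vec B" "v \<noteq> 0\<^sub>v B" "Nmat B M *\<^sub>v v = 0\<^sub>v B"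
    using det_0_iff_vec_prod_zero[OF Nmat_carrier] by blast
  define x where "x i = v $ i" for i
  define S where "S = (\<Sum>j<B. x j)"
  have eq: "x i - (\<Sum>j<B. M i j * x j) + S = 0" if i: "i < B" for i
  proof -
    have "(Nmat B M *\<^sub>v v) $ i = 0" using v(3) i by simp
    hence "(\<Sum>j<B. Nmat B M $$ (i,j) * x j) = 0"
      using mult_mat_vec_sum[OF Nmat_carrier v(1) i] by (simp add: x_def)
    hence "(\<Sum>j<B. ((if i = j then 1 else 0) - M i j + 1) * x j) = 0"
      by (simp add: Nmat_index i)
    moreover have "(\<Sum>j<B. ((if i = j then 1 else 0) - M i j + 1) * x j)
        = (\<Sum>j<B. (if i = j then x j else 0) - M i j * x j + x j)"
      by (rule sum.cong) (auto simp: algebra_simps)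
    moreover have "\<dots> = (\<Sum>j<B. (if i = j then x j else 0)) - (\<Sum>j<B. M i j * x j) + S"
      by (simp add: sum.distrib sum_subtractf S_def)
    moreover have "(\<Sum>j<B. (if i = j then x j else 0)) = x i" using i by (simp add: sum.delta)
    ultimately show ?thesis by simp
  qed
  have pM: "(\<Sum>i<B. p i * M i j) = p j" if "j < B" for j using sv that unfolding stationary_vec_def by auto
  have p1: "(\<Sum>i<B. p i) = 1" using sv unfolding stationary_vec_def by auto
  have "0 = (\<Sum>i<B. p i * (x i - (\<Sum>j<B. M i j * x j) + S))" using eq by simp
  also have "\<dots> = (\<Sum>i<B. p i * x i) - (\<Sum>i<B. \<Sum>j<B. p i * M i j * x j) + S * (\<Sum>i<B. p i)"
    by (simp add: algebra_simps sum.distrib sum_subtractf sum_distrib_left sum_distrib_right)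
  also have "(\<Sum>i<B. \<Sum>j<B. p i * M i j * x j) = (\<Sum>j<B. (\<Sum>i<B. p i * M i j) * x j)"
    by (subst sum.swap) (simp add: sum_distrib_right)
  also have "\<dots> = (\<Sum>j<B. p j * x j)" using pM by simp
  finally have S0: "S = 0" using p1 by simp
  have harm: "x i = (\<Sum>j<B. M i j * x j)" if "i < B" for i using eq[OF that] S0 by simp
  have B0: "0 < B" using v(1,2) by (cases B) auto
  have const: "x i = x 0" if "i < B" for i
    using harmonic_const[OF st irr harm that B0] .
  have "S = (\<Sum>j<B. x 0)" unfolding S_def by (rule sum.cong) (auto intro: const)
  hence "S = of_nat B * x 0" by simp
  hence "x 0 = 0" using S0 B0 by simp
  have "v = 0\<^sub>v B"
  proof (rule eq_vecI)
    show "dim_vec v = dim_vec (0\<^sub>v B)" using v(1) by simp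
    fix i assume "i < dim_vec (0\<^sub>v B)"
    hence i: "i < B" by simp
    show "v $ i = 0\<^sub>v B $ i" using const[OF i] \<open>x 0 = 0\<close> i by (simp add: x_def)
  qed
  with v(2) show False by simp
qed

lemma Nmat_adj_formula:
  assumes sv: "stationary_vec B M p" and j: "j < B"
  shows "Determinant.det (Nmat B M) * p j = (\<Sum>i<B. adj_mat (Nmat B M) $$ (i,j))"
proof -
  let ?N = "Nmat B M" let ?A = "adj_mat (Nmat B M)" let ?d = "Determinant.det (Nmat B M)"
  have Ac: "?A \<in> carrier_mat B B" using adj_mat(1)[OF Nmat_carrier] .
  have prod: "(\<Sum>i<B. ?N $$ (k,i) * ?A $$ (i,j)) = ?d * (if k = j then 1 else 0)" if k: "k < B" for k
  proof -
    have "(?N * ?A) $$ (k,j) = (?d \<cdot>\<^sub>m 1\<^sub>m B) $$ (k,j)" using adj_mat(2)[OF Nmat_carrier] by simp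
    thus ?thesis using mult_mat_sum[OF Nmat_carrier Ac k j] k j by simp
  qed
  have pM: "(\<Sum>k<B. p k * M k i) = p i" if "i < B" for i using sv that unfolding stationary_vec_def by auto
  have p1: "(\<Sum>i<B. p i) = 1" using sv unfolding stationary_vec_def by auto
  have pN: "(\<Sum>k<B. p k * ?N $$ (k,i)) = 1" if i: "i < B" for i
  proof -
    have "(\<Sum>k<B. p k * ?N $$ (k,i)) = (\<Sum>k<B. p k * ((if k = i then 1 else 0) - M k i + 1))"
      using i by (simp add: Nmat_index)
    also have "\<dots> = (\<Sum>k<B. (if k = i then p k else 0) - p k * M k i + p k)"
      by (rule sum.cong) (auto simp: algebra_simps)
    also have "\<dots> = (\<Sum>k<B. (if k = i then p k else 0)) - (\<Sum>k<B. p k * M k i) + (\<Sum>k<B. p k)"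
      by (simp add: sum.distrib sum_subtractf)
    also have "\<dots> = 1" using i pM[OF i] p1 by (simp add: sum.delta')
    finally show ?thesis .
  qed
  have "(\<Sum>i<B. ?A $$ (i,j)) = (\<Sum>i<B. (\<Sum>k<B. p k * ?N $$ (k,i)) * ?A $$ (i,j))"
    using pN by simp
  also have "\<dots> = (\<Sum>i<B. \<Sum>k<B. p k * (?N $$ (k,i) * ?A $$ (i,j)))"
    by (simp add: sum_distrib_right mult.assoc)
  also have "\<dots> = (\<Sum>k<B. \<Sum>i<B. p k * (?N $$ (k,i) * ?A $$ (i,j)))"
    by (rule sum.swap)
  also have "\<dots> = (\<Sum>k<B. p k * (\<Sum>i<B. ?N $$ (k,i) * ?A $$ (i,j)))"
    by (simp add: sum_distrib_left)
  also have "\<dots> = (\<Sum>k<B. p k * (?d * (if k = j then 1 else 0)))" using prod by simp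
  also have "\<dots> = (\<Sum>k<B. (if k = j then ?d * p k else 0))"
    by (rule sum.cong) auto
  also have "\<dots> = ?d * p j" using j by (simp add: sum.delta')
  finally show ?thesis by simp
qed



lemma hol0_step:
  assumes hM: "\<And>i j. i < B \<Longrightarrow> j < B \<Longrightarrow> hol0 (\<lambda>e. M e i j)"
    and hv: "\<And>j. j < B \<Longrightarrow> hol0 (\<lambda>e. v e j)" and j: "j < B"
  shows "hol0 (\<lambda>e. step_vec B Phi (M e) (v e) a j)"
proof (cases "Phi j = a")
  case True
  have "hol0 (\<lambda>e. \<Sum>i<B. v e i * M e i j)"
    by (rule hol0_sum) (auto intro!: hol0_mult hv hM j)
  then show ?thesis using True by (simp add: step_vec_def)
next
  case False
  then show ?thesis by (simp add: step_vec_def hol0_const)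
qed

lemma hol0_fwd:
  assumes hM: "\<And>i j. i < B \<Longrightarrow> j < B \<Longrightarrow> hol0 (\<lambda>e. M e i j)"
  shows "(\<And>j. j < B \<Longrightarrow> hol0 (\<lambda>e. v e j)) \<Longrightarrow> j < B \<Longrightarrow> hol0 (\<lambda>e. fwd_vec B Phi (M e) (v e) ws j)"
proof (induction ws arbitrary: v j)
  case Nil then show ?case by simp
next
  case (Cons a ws)
  have "hol0 (\<lambda>e. fwd_vec B Phi (M e) ((\<lambda>e. step_vec B Phi (M e) (v e) a) e) ws j)"
    by (rule Cons.IH) (auto intro: hol0_step hM Cons.prems)
  then show ?case by simp
qed

lemma fwd_nonneg:
  assumes "stochastic B M"
  shows "(\<And>i. i < B \<Longrightarrow> v i \<ge> 0) \<Longrightarrow> j < B \<Longrightarrow> fwd_vec B Phi M v ws j \<ge> 0"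
proof (induction ws arbitrary: v j)
  case Nil then show ?case by simp
next
  case (Cons a ws)
  have "step_vec B Phi M v a i \<ge> 0" if "i < B" for i
    using Cons.prems assms that unfolding step_vec_def stochastic_def by (auto intro!: sum_nonneg)
  then show ?case using Cons by simp
qed

lemma fwd_snoc: "fwd_vec B Phi M v (ws @ [a]) = step_vec B Phi M (fwd_vec B Phi M v ws) a"
  by (induction ws arbitrary: v) auto

lemma step_sum_le:
  assumes st: "stochastic B M" and v: "\<And>i. i < B \<Longrightarrow> v i \<ge> 0"
  shows "(\<Sum>j<B. step_vec B Phi M v a j) \<le> (\<Sum>i<B. v i)"
proof -
  have "(\<Sum>j<B. step_vec B Phi M v a j) \<le> (\<Sum>j<B. \<Sum>i<B. v i * M i j)"
  proof (rule sum_mono)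
    fix j assume "j \<in> {..<B}"
    hence "0 \<le> (\<Sum>i<B. v i * M i j)" using st v unfolding stochastic_def by (auto intro!: sum_nonneg)
    then show "step_vec B Phi M v a j \<le> (\<Sum>i<B. v i * M i j)" by (simp add: step_vec_def)
  qed
  also have "\<dots> = (\<Sum>i<B. \<Sum>j<B. v i * M i j)" by (rule sum.swap)
  also have "\<dots> = (\<Sum>i<B. v i * (\<Sum>j<B. M i j))" by (simp add: sum_distrib_left)
  also have "\<dots> = (\<Sum>i<B. v i)" using st unfolding stochastic_def by simp
  finally show ?thesis .
qed

theorem proposition2p3:
  fixes B A n :: nat
    and Phi :: "nat \<Rightarrow> nat"
    and Delta :: "real \<Rightarrow> nat \<Rightarrow> nat \<Rightarrow> real"
    and pi :: "real \<Rightarrow> nat \<Rightarrow> real"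
    and zs :: "nat list"
  assumes B_pos: "B \<ge> 1"
    and Phi_range: "\<forall>j<B. Phi j \<in> {1..A}"
    and entries_analytic: "\<forall>i<B. \<forall>j<B. analytic_at_0_closed (\<lambda>e. Delta e i j)"
    and stoch: "\<forall>e\<ge>0. stochastic B (Delta e)"
    and irred: "\<forall>e>0. irreducible_mat B (Delta e)"
    and stat: "\<forall>e>0. stationary_vec B (Delta e) (pi e)"
    and zs_len: "length zs = n + 1"
    and zs_range: "set zs \<subseteq> {1..A}"
  shows "analytic_at_0 (\<lambda>e. word_prob B Phi (Delta e) (pi e) (take n zs))
    \<and> (\<forall>k\<in>{1..n}. (\<exists>d>0. \<forall>e. 0 < e \<and> e < d \<longrightarrow> word_prob B Phi (Delta e) (pi e) (take k zs) > 0)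
          \<longrightarrow> (\<forall>b<B. analytic_at_0 (\<lambda>e. cond_state_prob B Phi (Delta e) (pi e) (take k zs) b)))
    \<and> ((\<exists>d>0. \<forall>e. 0 < e \<and> e < d \<longrightarrow> word_prob B Phi (Delta e) (pi e) (take n zs) > 0)
          \<longrightarrow> analytic_at_0 (\<lambda>e. cond_next_prob B Phi (Delta e) (pi e) (take n zs) (last zs)))"
proof -
  have hD: "hol0 (\<lambda>e. Delta e i j)" if "i < B" "j < B" for i j
    using entries_analytic that by (auto intro: analytic_imp_hol0 closed_imp_analytic)
  have hN: "hol0 (\<lambda>e. Nmat B (Delta e) $$ (i,j))" if ij: "i < B" "j < B" for i j
  proof -
    have "(\<lambda>e. Nmat B (Delta e) $$ (i,j)) = (\<lambda>e. (if i = j then 1 else 0) - Delta e i j + 1)"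
      using ij by (simp add: Nmat_index)
    moreover have "hol0 (\<lambda>e. (if i = j then 1 else 0) - Delta e i j + 1)"
      by (intro hol0_add hol0_diff hol0_const hD ij)
    ultimately show ?thesis by simp
  qed
  have one_pos: "(0::real) < 1" by simp
  have hpi: "hol0 (\<lambda>e. pi e j)" if j: "j < B" for j
  proof -
    define f where "f e = (\<Sum>i<B. adj_mat (Nmat B (Delta e)) $$ (i,j))" for e
    define g where "g e = Determinant.det (Nmat B (Delta e))" for e
    have hf: "hol0 f" unfolding f_def
      by (rule hol0_sum) (auto intro!: hol0_adj[OF Nmat_carrier] hN j)
    have hg: "hol0 g" unfolding g_def by (rule hol0_det[OF Nmat_carrier]) (rule hN)
    have fg: "f e = g e * pi e j" "g e \<noteq> 0" if "0 < e" for e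
      unfolding f_def g_def
      using Nmat_adj_formula[OF stat[rule_format, OF that] j]
        Nmat_det_nz[OF stoch[rule_format] irred[rule_format, OF that] stat[rule_format, OF that]] that
      by auto
    have pib: "0 \<le> pi e j" "pi e j \<le> 1" if "0 < e" for e
    proof -
      have sv: "stationary_vec B (Delta e) (pi e)" using stat that by auto
      show "0 \<le> pi e j" using sv j unfolding stationary_vec_def by auto
      have "pi e j \<le> (\<Sum>i<B. pi e i)"
        by (rule member_le_sum) (use sv j in \<open>auto simp: stationary_vec_def\<close>)
      then show "pi e j \<le> 1" using sv unfolding stationary_vec_def by simp
    qed
    have "hol0 (\<lambda>e. f e / g e)"
    proof (rule hol0_div[OF hf hg one_pos])
      fix e :: real assume e: "0 < e" "e < 1"
      show "g e \<noteq> 0" using fg e by simp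
      have "\<bar>f e\<bar> = \<bar>g e\<bar> * \<bar>pi e j\<bar>" using fg(1)[OF e(1)] by (simp add: abs_mult)
      also have "\<dots> \<le> \<bar>g e\<bar> * 1" using pib[OF e(1)] by (intro mult_left_mono) auto
      finally show "\<bar>f e\<bar> \<le> \<bar>g e\<bar>" by simp
    qed
    then show ?thesis
      by (rule hol0_cong[OF _ one_pos]) (use fg in simp)
  qed
  have hfwd: "hol0 (\<lambda>e. fwd_vec B Phi (Delta e) (pi e) ws j)" if "j < B" for ws j
    by (rule hol0_fwd[OF hD hpi that])
  have hwp: "hol0 (\<lambda>e. word_prob B Phi (Delta e) (pi e) ws)" for ws
    unfolding word_prob_def by (rule hol0_sum) (auto intro: hfwd)
  have nn: "fwd_vec B Phi (Delta e) (pi e) ws j \<ge> 0" if "0 < e" "j < B" for e ws j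
    by (rule fwd_nonneg[OF stoch[rule_format]]) (use stat that in \<open>auto simp: stationary_vec_def\<close>)
  have P1: "analytic_at_0 (\<lambda>e. word_prob B Phi (Delta e) (pi e) (take n zs))"
    by (rule hol0_imp_analytic[OF hwp])
  have P2: "\<forall>b<B. analytic_at_0 (\<lambda>e. cond_state_prob B Phi (Delta e) (pi e) (take k zs) b)"
    if ex: "\<exists>d>0. \<forall>e. 0 < e \<and> e < d \<longrightarrow> word_prob B Phi (Delta e) (pi e) (take k zs) > 0" for k
  proof (intro allI impI)
    fix b assume b: "b < B"
    obtain d where d: "d > 0" "\<And>e. 0 < e \<Longrightarrow> e < d \<Longrightarrow> word_prob B Phi (Delta e) (pi e) (take k zs) > 0"
      using ex by blast
    have "hol0 (\<lambda>e. fwd_vec B Phi (Delta e) (pi e) (take k zs) b / word_prob B Phi (Delta e) (pi e) (take k zs))"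
    proof (rule hol0_div[OF hfwd[OF b] hwp d(1)])
      fix e :: real assume e: "0 < e" "e < d"
      show "word_prob B Phi (Delta e) (pi e) (take k zs) \<noteq> 0" using d(2)[OF e] by simp
      have "fwd_vec B Phi (Delta e) (pi e) (take k zs) b \<le> word_prob B Phi (Delta e) (pi e) (take k zs)"
        unfolding word_prob_def by (rule member_le_sum) (use b nn e in auto)
      then show "\<bar>fwd_vec B Phi (Delta e) (pi e) (take k zs) b\<bar> \<le> \<bar>word_prob B Phi (Delta e) (pi e) (take k zs)\<bar>"
        using nn[OF e(1) b] by simp
    qed
    then show "analytic_at_0 (\<lambda>e. cond_state_prob B Phi (Delta e) (pi e) (take k zs) b)"
      unfolding cond_state_prob_def by (rule hol0_imp_analytic)
  qed
  have P3: "analytic_at_0 (\<lambda>e. cond_next_prob B Phi (Delta e) (pi e) (take n zs) (last zs))"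
    if ex: "\<exists>d>0. \<forall>e. 0 < e \<and> e < d \<longrightarrow> word_prob B Phi (Delta e) (pi e) (take n zs) > 0"
  proof -
    obtain d where d: "d > 0" "\<And>e. 0 < e \<Longrightarrow> e < d \<Longrightarrow> word_prob B Phi (Delta e) (pi e) (take n zs) > 0"
      using ex by blast
    let ?w = "take n zs" let ?a = "last zs"
    have "hol0 (\<lambda>e. word_prob B Phi (Delta e) (pi e) (?w @ [?a]) / word_prob B Phi (Delta e) (pi e) ?w)"
    proof (rule hol0_div[OF hwp hwp d(1)])
      fix e :: real assume e: "0 < e" "e < d"
      show "word_prob B Phi (Delta e) (pi e) ?w \<noteq> 0" using d(2)[OF e] by simp
      have "word_prob B Phi (Delta e) (pi e) (?w @ [?a]) \<le> word_prob B Phi (Delta e) (pi e) ?w"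
        unfolding word_prob_def fwd_snoc
        by (rule step_sum_le[OF stoch[rule_format]]) (use nn e in auto)
      moreover have "0 \<le> word_prob B Phi (Delta e) (pi e) (?w @ [?a])"
        unfolding word_prob_def by (rule sum_nonneg) (use nn e in auto)
      ultimately show "\<bar>word_prob B Phi (Delta e) (pi e) (?w @ [?a])\<bar> \<le> \<bar>word_prob B Phi (Delta e) (pi e) ?w\<bar>"
        by simp
    qed
    then show ?thesis unfolding cond_next_prob_def by (rule hol0_imp_analytic)
  qed
  show ?thesis using P1 P2 P3 by blast
qed

end
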